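(* Let $I$ be an instance of 2-SCSS-$(k,1)$ given by a directed graph $G=(V,E)$ with edge weights $\omega:E\to\mathbb{R}^{\geq 0}$ and terminals $s,t$, and let $I'$ be the Token Game constructed from $I$ as described in the context. Then $\mathrm{OPT}(I)\leq \mathrm{OPT}(I')$.
   Context: 2-SCSS-$(k,1)$: find $k$ paths $F_1,\dots,F_k$ from $s$ to $t$ and one path $B$ from $t$ to $s$ minimizing $\sum_{e\in E}\omega(e)\max\{|\{i: e\in F_i\}|,\ [e\in B]\}$; $\mathrm{OPT}(I)$ is this minimum. The Token Game $I'$: tokens $\mathbf{b},\mathbf{f}_1,\dots,\mathbf{f}_k$; states are vectors $\bar v=(v_0,v_1,\dots,v_k)\in V^{k+1}$ ($v_0$ the location of $\mathbf{b}$, $v_i$ that of $\mathbf{f}_i$); start state $(s,\dots,s)$, end state $(t,\dots,t)$. From each state $\bar v$ the moves are: (Backward) for each edge $(w,v_0)\in E$, move to the state obtained by replacing $v_0$ by $w$, at cost $\omega(w,v_0)$; (Forward) for each $i\in[k]$ and each edge $(v_i,x)\in E$, move to the state obtained by replacing $v_i$ by $x$, at cost $\omega(v_i,x)$; (Flip) for each $i\in[k]$, move to the state obtained by swapping $v_0$ and $v_i$ (new coordinate $0$ is $v_i$, new coordinate $i$ is $v_0$, others unchanged), at cost equal to the weight of a shortest $v_i\leadsto v_0$ path in $G$. $\mathrm{OPT}(I')$ is the minimum total cost of a sequence of moves from the start state to the end state. *)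

theory Defs
  imports Main "HOL-Library.Extended_Real"
begin

(* A directed graph is given by its edge set E :: ('v \<times> 'v) set over vertex set V,
   weights \<omega> :: 'v \<times> 'v \<Rightarrow> real.  A path is represented by its vertex list. *)

definition walk :: "('v \<times> 'v) set \<Rightarrow> 'v list \<Rightarrow> 'v \<Rightarrow> 'v \<Rightarrow> bool" where
  "walk E p u v \<longleftrightarrow> p \<noteq> [] \<and> hd p = u \<and> last p = v \<and> set (zip p (tl p)) \<subseteq> E"

definition edges_of :: "'v list \<Rightarrow> ('v \<times> 'v) set" where
  "edges_of p = set (zip p (tl p))"

(* weight of a path (edges counted with multiplicity) *)
definition walk_weight :: "('v \<times> 'v \<Rightarrow> real) \<Rightarrow> 'v list \<Rightarrow> real" where
  "walk_weight \<omega> p = sum_list (map \<omega> (zip p (tl p)))"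

definition scss_cost ::
  "('v \<times> 'v) set \<Rightarrow> ('v \<times> 'v \<Rightarrow> real) \<Rightarrow> nat \<Rightarrow> (nat \<Rightarrow> 'v list) \<Rightarrow> 'v list \<Rightarrow> real" where
  "scss_cost E \<omega> k F B =
     (\<Sum>e\<in>E. \<omega> e * real (max (card {i\<in>{1..k}. e \<in> edges_of (F i)})
                                   (if e \<in> edges_of B then 1 else 0)))"

definition scss_feasible ::
  "('v \<times> 'v) set \<Rightarrow> nat \<Rightarrow> 'v \<Rightarrow> 'v \<Rightarrow> (nat \<Rightarrow> 'v list) \<Rightarrow> 'v list \<Rightarrow> bool" where
  "scss_feasible E k s t F B \<longleftrightarrow> (\<forall>i\<in>{1..k}. walk E (F i) s t) \<and> walk E B t s"

(* OPT(I), as an extended real (infinity if there is no feasible solution) *)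
definition OPT_scss ::
  "('v \<times> 'v) set \<Rightarrow> ('v \<times> 'v \<Rightarrow> real) \<Rightarrow> nat \<Rightarrow> 'v \<Rightarrow> 'v \<Rightarrow> ereal" where
  "OPT_scss E \<omega> k s t =
     (INF FB \<in> {(F, B). scss_feasible E k s t F B}. ereal (scss_cost E \<omega> k (fst FB) (snd FB)))"

(* weight of a shortest u \<leadsto> v path in G (infinity if none exists) *)
definition sp_dist :: "('v \<times> 'v) set \<Rightarrow> ('v \<times> 'v \<Rightarrow> real) \<Rightarrow> 'v \<Rightarrow> 'v \<Rightarrow> ereal" where
  "sp_dist E \<omega> u v = (INF p \<in> {p. walk E p u v}. ereal (walk_weight \<omega> p))"

(* Token game: a state is a list (v_0, v_1, ..., v_k) of length k+1;
   tg_move E \<omega> k st st' c: one move from st to st' of cost c *)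
inductive tg_move ::
  "('v \<times> 'v) set \<Rightarrow> ('v \<times> 'v \<Rightarrow> real) \<Rightarrow> nat \<Rightarrow> 'v list \<Rightarrow> 'v list \<Rightarrow> ereal \<Rightarrow> bool"
  for E \<omega> k where
  backward: "(w, st ! 0) \<in> E \<Longrightarrow>
     tg_move E \<omega> k st (st[0 := w]) (ereal (\<omega> (w, st ! 0)))"
| forward: "i \<in> {1..k} \<Longrightarrow> (st ! i, x) \<in> E \<Longrightarrow>
     tg_move E \<omega> k st (st[i := x]) (ereal (\<omega> (st ! i, x)))"
| flip: "i \<in> {1..k} \<Longrightarrow>
     tg_move E \<omega> k st (st[0 := st ! i, i := st ! 0]) (sp_dist E \<omega> (st ! i) (st ! 0))"

inductive tg_run ::
  "('v \<times> 'v) set \<Rightarrow> ('v \<times> 'v \<Rightarrow> real) \<Rightarrow> nat \<Rightarrow> 'v list \<Rightarrow> 'v list \<Rightarrow> ereal \<Rightarrow> bool"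
  for E \<omega> k where
  nil: "tg_run E \<omega> k st st 0"
| cons: "tg_move E \<omega> k st st' c \<Longrightarrow> tg_run E \<omega> k st' st'' d \<Longrightarrow>
     tg_run E \<omega> k st st'' (c + d)"

definition OPT_token ::
  "('v \<times> 'v) set \<Rightarrow> ('v \<times> 'v \<Rightarrow> real) \<Rightarrow> nat \<Rightarrow> 'v \<Rightarrow> 'v \<Rightarrow> ereal" where
  "OPT_token E \<omega> k s t =
     (INF c \<in> {c. tg_run E \<omega> k (replicate (Suc k) s) (replicate (Suc k) t) c}. c)"

end

theory Submission imports Defs begin

lemma zip_tl_append:
  "xs \<noteq> [] \<Longrightarrow> ys \<noteq> [] \<Longrightarrow>
   zip (xs @ ys) (tl (xs @ ys)) = zip xs (tl xs) @ (last xs, hd ys) # zip ys (tl ys)"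
proof (induction xs)
  case Nil then show ?case by simp
next
  case (Cons a xs)
  show ?case
  proof (cases "xs = []")
    case True then show ?thesis using Cons.prems by (cases ys) auto
  next
    case False
    then obtain b xs' where xs: "xs = b # xs'" by (cases xs) auto
    with Cons show ?thesis by auto
  qed
qed

lemma zip_tl_join:
  assumes "p \<noteq> []" "q \<noteq> []" "last p = hd q"
  shows "zip (p @ tl q) (tl (p @ tl q)) = zip p (tl p) @ zip q (tl q)"
proof (cases "tl q = []")
  case True
  then show ?thesis using assms by (cases q) auto
next
  case False
  obtain a r where q: "q = a # r" using assms by (cases q) auto
  with False obtain b r' where r: "r = b # r'" by (cases r) auto
  show ?thesis using zip_tl_append[of p "tl q"] assms q r False by auto
qed

lemma walk_join:
  assumes "walk E p u v" "walk E q v w"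
  shows "walk E (p @ tl q) u w"
    and "edges_of (p @ tl q) = edges_of p \<union> edges_of q"
    and "walk_weight \<omega> (p @ tl q) = walk_weight \<omega> p + walk_weight \<omega> q"
proof -
  have z: "zip (p @ tl q) (tl (p @ tl q)) = zip p (tl p) @ zip q (tl q)"
    using assms zip_tl_join[of p q] unfolding walk_def by auto
  show "walk E (p @ tl q) u w"
    using assms z unfolding walk_def
    by (cases q) (auto simp: last_append split: if_splits)
  show "edges_of (p @ tl q) = edges_of p \<union> edges_of q" using z unfolding edges_of_def by simp
  show "walk_weight \<omega> (p @ tl q) = walk_weight \<omega> p + walk_weight \<omega> q"
    using z unfolding walk_weight_def by simp
qed

lemma walk_weight_nonneg:
  assumes "walk E p u v" "\<And>e. e \<in> E \<Longrightarrow> \<omega> e \<ge> 0"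
  shows "walk_weight \<omega> p \<ge> 0"
  using assms unfolding walk_def walk_weight_def
  by (intro sum_list_nonneg) auto

lemma walk_shorten:
  assumes "walk E p u v" "\<And>e. e \<in> E \<Longrightarrow> \<omega> e \<ge> 0"
  shows "\<exists>q. walk E q u v \<and> distinct q \<and> walk_weight \<omega> q \<le> walk_weight \<omega> p \<and> set q \<subseteq> set p"
  using assms(1)
proof (induction "length p" arbitrary: p rule: less_induct)
  case less
  show ?case
  proof (cases "distinct p")
    case True then show ?thesis using less.prems by auto
  next
    case False
    then obtain xs ys zs y where p: "p = xs@[y]@ys@[y]@zs" using not_distinct_decomp by blast
    have p2: "p = ((xs @ [y]) @ tl (y # ys @ [y])) @ tl (y # zs)" using p by simp
    have zz: "zip p (tl p) = zip ((xs @ [y]) @ tl (y # ys @ [y])) (tl ((xs @ [y]) @ tl (y # ys @ [y]))) @ zip (y # zs) (tl (y # zs))"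
    proof -
      have "zip (((xs @ [y]) @ tl (y # ys @ [y])) @ tl (y # zs)) (tl (((xs @ [y]) @ tl (y # ys @ [y])) @ tl (y # zs))) = zip ((xs @ [y]) @ tl (y # ys @ [y])) (tl ((xs @ [y]) @ tl (y # ys @ [y]))) @ zip (y # zs) (tl (y # zs))"
        by (rule zip_tl_join) auto
      then show ?thesis using p2 by metis
    qed
    have hh: "hd ((xs @ [y]) @ tl (y # ys @ [y])) = hd p" using p by (cases xs) auto
    have w0: "walk E ((xs @ [y]) @ tl (y # ys @ [y])) u y"
      and w3: "walk E (y # zs) y v"
      using less.prems zz hh p unfolding walk_def
      by (auto simp: last_append)
    have w1: "walk E (xs @ [y]) u y" and w2: "walk E (y # ys @ [y]) y y"
    proof -
      have z2: "zip ((xs @ [y]) @ tl (y # ys @ [y])) (tl ((xs @ [y]) @ tl (y # ys @ [y]))) = zip (xs @ [y]) (tl (xs @ [y])) @ zip (y # ys @ [y]) (tl (y # ys @ [y]))"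
        by (rule zip_tl_join) auto
      have "hd (xs @ [y]) = hd ((xs @ [y]) @ tl (y # ys @ [y]))" by (cases xs) auto
      then show "walk E (xs @ [y]) u y" "walk E (y # ys @ [y]) y y"
        using w0 z2 unfolding walk_def by auto
    qed
    have q: "walk E ((xs @ [y]) @ tl (y # zs)) u v"
      "walk_weight \<omega> ((xs @ [y]) @ tl (y # zs)) = walk_weight \<omega> (xs @ [y]) + walk_weight \<omega> (y # zs)"
      using walk_join[OF w1 w3] by auto
    have "walk_weight \<omega> p = walk_weight \<omega> (xs @ [y]) + walk_weight \<omega> (y # ys @ [y]) + walk_weight \<omega> (y # zs)"
      using p2 walk_join[OF w1 w2] walk_join[OF w0 w3] by metis
    moreover have "walk_weight \<omega> (y # ys @ [y]) \<ge> 0" using walk_weight_nonneg[OF w2 assms(2)] .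
    ultimately have le: "walk_weight \<omega> ((xs @ [y]) @ tl (y # zs)) \<le> walk_weight \<omega> p" using q by simp
    have "length ((xs @ [y]) @ tl (y # zs)) < length p" using p by simp
    from less.hyps[OF this q(1)] le show ?thesis using p by fastforce
  qed
qed

lemma walk_set:
  "q \<noteq> [] \<Longrightarrow> set q \<subseteq> insert (hd q) (snd ` set (zip q (tl q)))"
proof (induction q)
  case Nil then show ?case by simp
next
  case (Cons a r)
  show ?case
  proof (cases r)
    case Nil then show ?thesis by simp
  next
    case (Cons b r')
    with Cons.IH have "set r \<subseteq> insert b (snd ` set (zip r (tl r)))" by simp
    then show ?thesis using Cons by auto
  qed
qed

lemma walk_in_V:
  assumes "walk E q u v" "E \<subseteq> V \<times> V"
  shows "set q \<subseteq> insert u V"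
proof -
  have "snd ` set (zip q (tl q)) \<subseteq> V" using assms unfolding walk_def by auto
  then show ?thesis using walk_set[of q] assms unfolding walk_def by blast
qed

lemma sp_attained:
  assumes "finite V" "E \<subseteq> V \<times> V" "\<And>e. e \<in> E \<Longrightarrow> \<omega> e \<ge> 0"
    and "sp_dist E \<omega> u v \<noteq> \<infinity>"
  shows "\<exists>q. walk E q u v \<and> ereal (walk_weight \<omega> q) \<le> sp_dist E \<omega> u v"
proof -
  have "{p. walk E p u v} \<noteq> {}"
  proof
    assume "{p. walk E p u v} = {}"
    then have "sp_dist E \<omega> u v = \<infinity>" unfolding sp_dist_def by (simp add: top_ereal_def)
    then show False using assms(4) by simp
  qed
  then obtain p where p: "walk E p u v" by auto
  define W where "W = {q. set q \<subseteq> insert u V \<and> distinct q \<and> walk E q u v}"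
  have "W \<subseteq> {xs. set xs \<subseteq> insert u V \<and> distinct xs}" unfolding W_def by blast
  moreover have "finite {xs. set xs \<subseteq> insert u V \<and> distinct xs}"
    using assms(1) by (intro finite_subset_distinct) simp
  ultimately have fW: "finite W" by (rule finite_subset)
  obtain q1 where q1: "walk E q1 u v" "distinct q1"
    using walk_shorten[of E p u v \<omega>] p assms(3) by blast
  then have "q1 \<in> W" using walk_in_V[OF q1(1) assms(2)] unfolding W_def by blast
  then have "walk_weight \<omega> ` W \<noteq> {}" by auto
  from ex_min_if_finite[OF finite_imageI[OF fW] this]
  obtain m where m: "m \<in> walk_weight \<omega> ` W" "\<not> (\<exists>x\<in>walk_weight \<omega> ` W. x < m)" by blast
  then obtain q0 where q0: "q0 \<in> W" "m = walk_weight \<omega> q0" by blast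
  have q0': "walk_weight \<omega> q0 \<le> walk_weight \<omega> q" if "q \<in> W" for q
  proof (rule ccontr)
    assume "\<not> walk_weight \<omega> q0 \<le> walk_weight \<omega> q"
    then have "walk_weight \<omega> q < m" using q0 by simp
    then show False using m(2) that by blast
  qed
  have "ereal (walk_weight \<omega> q0) \<le> sp_dist E \<omega> u v"
    unfolding sp_dist_def
  proof (rule INF_greatest)
    fix p assume "p \<in> {p. walk E p u v}"
    then obtain q where q: "walk E q u v" "distinct q" "walk_weight \<omega> q \<le> walk_weight \<omega> p"
      using walk_shorten[of E p u v \<omega>] assms(3) by blast
    then have "q \<in> W" using walk_in_V[OF q(1) assms(2)] unfolding W_def by blast
    then show "ereal (walk_weight \<omega> q0) \<le> ereal (walk_weight \<omega> p)" using q0'[OF \<open>q \<in> W\<close>] q(3) by simp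
  qed
  moreover have "walk E q0 u v" using q0 unfolding W_def by blast
  ultimately show ?thesis by blast
qed


lemma move_nonneg:
  assumes "tg_move E \<omega> k st st' c" "\<And>e. e \<in> E \<Longrightarrow> \<omega> e \<ge> 0"
  shows "c \<ge> 0"
  using assms(1)
proof cases
  case (flip i)
  have "0 \<le> sp_dist E \<omega> (st ! i) (st ! 0)"
    unfolding sp_dist_def
  proof (rule INF_greatest)
    fix p assume "p \<in> {p. walk E p (st ! i) (st ! 0)}"
    then show "0 \<le> ereal (walk_weight \<omega> p)"
      using walk_weight_nonneg[of E p "st ! i" "st ! 0" \<omega>] assms(2) by auto
  qed
  then show ?thesis using flip by simp
qed (use assms(2) in auto)

lemma run_nonneg:
  assumes "tg_run E \<omega> k st st' c" "\<And>e. e \<in> E \<Longrightarrow> \<omega> e \<ge> 0"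
  shows "c \<ge> 0"
  using assms(1)
proof induction
  case (cons st st' c st'' d)
  then show ?case using move_nonneg[OF cons(1) assms(2)] by (simp add: add_nonneg_nonneg)
qed simp

definition cnt :: "('v \<times> 'v) \<Rightarrow> 'v list list \<Rightarrow> nat" where
  "cnt e Ps = sum_list (map (\<lambda>p. if e \<in> edges_of p then 1 else 0) Ps)"

lemma cnt_Cons: "cnt e (p # Ps) = (if e \<in> edges_of p then 1 else 0) + cnt e Ps"
  by (simp add: cnt_def)

lemma card_upd:
  fixes F F' :: "nat \<Rightarrow> 'v list" and k :: nat
  assumes "\<And>j. j \<noteq> i \<Longrightarrow> F' j = F j" "edges_of (F' i) \<subseteq> edges_of p \<union> edges_of (F i)"
  shows "card {j\<in>{1..k}. e \<in> edges_of (F' j)} \<le> card {j\<in>{1..k}. e \<in> edges_of (F j)} + (if e \<in> edges_of p then 1 else 0)"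
proof (cases "e \<in> edges_of p")
  have fin: "finite {j\<in>{1..k}. e \<in> edges_of (G j)}" for G :: "nat \<Rightarrow> 'v list"
    by (rule finite_subset[of _ "{1..k}"]) auto
  case False
  have "{j\<in>{1..k}. e \<in> edges_of (F' j)} \<subseteq> {j\<in>{1..k}. e \<in> edges_of (F j)}"
    using assms False by fastforce
  then have "card {j\<in>{1..k}. e \<in> edges_of (F' j)} \<le> card {j\<in>{1..k}. e \<in> edges_of (F j)}"
    by (intro card_mono fin)
  then show ?thesis using False by simp
next
  case True
  have "{j\<in>{1..k}. e \<in> edges_of (F' j)} \<subseteq> insert i {j\<in>{1..k}. e \<in> edges_of (F j)}"
    using assms by auto
  then have "card {j\<in>{1..k}. e \<in> edges_of (F' j)} \<le> card (insert i {j\<in>{1..k}. e \<in> edges_of (F j)})"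
    by (intro card_mono) auto
  also have "\<dots> \<le> card {j\<in>{1..k}. e \<in> edges_of (F j)} + 1"
    by (simp add: card_insert_if)
  finally show ?thesis using True by simp
qed


definition scss_inv where
  "scss_inv E \<omega> k st st' c \<longleftrightarrow> (\<exists>F B Ps. (\<forall>i\<in>{1..k}. walk E (F i) (st!i) (st'!i)) \<and> walk E B (st'!0) (st!0)
     \<and> (\<forall>p\<in>set Ps. \<exists>a b. walk E p a b)
     \<and> (\<forall>e. card {i\<in>{1..k}. e \<in> edges_of (F i)} \<le> cnt e Ps \<and> (e \<in> edges_of B \<longrightarrow> 1 \<le> cnt e Ps))
     \<and> ereal (sum_list (map (walk_weight \<omega>) Ps)) \<le> c)"

lemma inv_cons:
  fixes F F' :: "nat \<Rightarrow> 'v list"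
  assumes "\<forall>p\<in>set Ps. \<exists>a b. walk E p a b"
    and "\<forall>e. card {i\<in>{1..k}. e \<in> edges_of (F i)} \<le> cnt e Ps \<and> (e \<in> edges_of B \<longrightarrow> 1 \<le> cnt e Ps)"
    and "ereal (sum_list (map (walk_weight \<omega>) Ps)) \<le> d"
    and "walk E p a b" "ereal (walk_weight \<omega> p) \<le> c"
    and "\<forall>i\<in>{1..k}. walk E (F' i) (st!i) (st''!i)" "walk E B' (st''!0) (st!0)"
    and "\<And>e. card {i\<in>{1..k}. e \<in> edges_of (F' i)} \<le> card {i\<in>{1..k}. e \<in> edges_of (F i)} + (if e \<in> edges_of p then 1 else 0)"
    and "edges_of B' \<subseteq> edges_of B \<union> edges_of p"
  shows "scss_inv E \<omega> k st st'' (c + d)"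
  unfolding scss_inv_def
proof (intro exI conjI allI impI)
  show "\<forall>i\<in>{1..k}. walk E (F' i) (st!i) (st''!i)" "walk E B' (st''!0) (st!0)" by fact+
  show "\<forall>q\<in>set (p # Ps). \<exists>a b. walk E q a b" using assms(1,4) by auto
  fix e
  show "card {i\<in>{1..k}. e \<in> edges_of (F' i)} \<le> cnt e (p # Ps)"
    using spec[OF assms(2), of e] assms(8)[of e] by (simp add: cnt_Cons)
  assume "e \<in> edges_of B'"
  then show "1 \<le> cnt e (p # Ps)" using spec[OF assms(2), of e] assms(9) by (auto simp: cnt_Cons)
next
  have "ereal (sum_list (map (walk_weight \<omega>) (p # Ps))) = ereal (walk_weight \<omega> p) + ereal (sum_list (map (walk_weight \<omega>) Ps))"
    by simp
  also have "\<dots> \<le> c + d" by (rule add_mono[OF assms(5) assms(3)])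
  finally show "ereal (sum_list (map (walk_weight \<omega>) (p # Ps))) \<le> c + d" .
qed

lemma move_length: "tg_move E \<omega> k st st' c \<Longrightarrow> length st' = length st"
  by (induction rule: tg_move.induct) auto

lemma walk_single: "walk E [x] x x" by (simp add: walk_def)
lemma edges_single: "edges_of [x] = {}" by (simp add: edges_of_def)
lemma walk_edge: "(a, b) \<in> E \<Longrightarrow> walk E [a, b] a b" by (simp add: walk_def)
lemma edges_edge: "edges_of [a, b] = {(a, b)}" by (simp add: edges_of_def)
lemma weight_edge: "walk_weight \<omega> [a, b] = \<omega> (a, b)" by (simp add: walk_weight_def)

lemma run_inv:
  assumes "finite V" "E \<subseteq> V \<times> V" "\<And>e. e \<in> E \<Longrightarrow> \<omega> e \<ge> 0"
  shows "tg_run E \<omega> k st st' c \<Longrightarrow> length st = Suc k \<Longrightarrow> c \<noteq> \<infinity> \<Longrightarrow> scss_inv E \<omega> k st st' c"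
proof (induction rule: tg_run.induct)
  case (nil st)
  show ?case unfolding scss_inv_def
    by (rule exI[of _ "\<lambda>i. [st ! i]"], rule exI[of _ "[st ! 0]"], rule exI[of _ "[]"])
       (simp add: walk_single edges_single cnt_def)
next
  case (cons st st1 c st'' d)
  have len1: "length st1 = Suc k" using move_length[OF cons(1)] cons(4) by simp
  have c0: "c \<ge> 0" using move_nonneg[OF cons(1) assms(3)] .
  have d0: "d \<ge> 0" using run_nonneg[OF cons(2) assms(3)] .
  have cinf: "c \<noteq> \<infinity>" and dinf: "d \<noteq> \<infinity>" using cons(5) c0 d0 by auto
  from cons(3)[OF len1 dinf] obtain F B Ps where
    IF: "\<forall>i\<in>{1..k}. walk E (F i) (st1!i) (st''!i)" and IB: "walk E B (st''!0) (st1!0)"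
    and IP: "\<forall>p\<in>set Ps. \<exists>a b. walk E p a b"
    and IC: "\<forall>e. card {i\<in>{1..k}. e \<in> edges_of (F i)} \<le> cnt e Ps \<and> (e \<in> edges_of B \<longrightarrow> 1 \<le> cnt e Ps)"
    and IW: "ereal (sum_list (map (walk_weight \<omega>) Ps)) \<le> d"
    unfolding scss_inv_def by blast
  from cons(1) show ?case
  proof cases
    case (backward w)
    have p: "walk E [w, st!0] w (st!0)" using backward walk_edge by metis
    have st1i: "\<forall>i\<in>{1..k}. st1 ! i = st ! i" using backward by auto
    have B': "walk E (B @ tl [w, st!0]) (st''!0) (st!0)"
      "edges_of (B @ tl [w, st!0]) = edges_of B \<union> edges_of [w, st!0]"
    proof -
      have "st1 ! 0 = w" using backward cons(4) by simp
      then show "walk E (B @ tl [w, st!0]) (st''!0) (st!0)"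
        "edges_of (B @ tl [w, st!0]) = edges_of B \<union> edges_of [w, st!0]"
        using walk_join[OF _ p, of B "st''!0"] IB by auto
    qed
    show ?thesis
      by (rule inv_cons[OF IP IC IW p, where F'=F and B'="B @ tl [w, st!0]"])
         (use backward weight_edge[of \<omega> w "st!0"] IF st1i B' in auto)
  next
    case (forward i x)
    have ilt: "i < length st" using forward cons(4) by auto
    have p: "walk E [st!i, x] (st!i) x" using forward walk_edge by metis
    have st1i: "st1 ! i = x" using forward ilt by simp
    have st1j: "\<And>j. j \<noteq> i \<Longrightarrow> st1 ! j = st ! j" using forward by simp
    have Fi: "walk E ([st!i, x] @ tl (F i)) (st!i) (st''!i)"
      "edges_of ([st!i, x] @ tl (F i)) = edges_of [st!i, x] \<union> edges_of (F i)"
    proof -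
      have "walk E (F i) (st1!i) (st''!i)" using IF forward(3) by blast
      then have Fw: "walk E (F i) x (st''!i)" using st1i by simp
      show "walk E ([st!i, x] @ tl (F i)) (st!i) (st''!i)"
        "edges_of ([st!i, x] @ tl (F i)) = edges_of [st!i, x] \<union> edges_of (F i)"
        using walk_join[OF p Fw] by auto
    qed
    define F' where "F' = F(i := [st!i, x] @ tl (F i))"
    have "\<forall>j\<in>{1..k}. walk E (F' j) (st!j) (st''!j)"
      using IF Fi st1j unfolding F'_def by auto
    moreover have "walk E B (st''!0) (st!0)" using IB st1j forward by auto
    moreover have "\<And>e. card {j\<in>{1..k}. e \<in> edges_of (F' j)} \<le> card {j\<in>{1..k}. e \<in> edges_of (F j)} + (if e \<in> edges_of [st!i, x] then 1 else 0)"
    proof (rule card_upd)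
      show "\<And>j. j \<noteq> i \<Longrightarrow> F' j = F j" by (simp add: F'_def)
      show "edges_of (F' i) \<subseteq> edges_of [st!i, x] \<union> edges_of (F i)"
        unfolding F'_def fun_upd_same Fi(2) by (rule subset_refl)
    qed
    ultimately show ?thesis
      using inv_cons[OF IP IC IW p, of c F' st st'' B] forward weight_edge[of \<omega> "st!i" x] by auto
  next
    case (flip i)
    have ilt: "i < length st" using flip cons(4) by auto
    have "sp_dist E \<omega> (st ! i) (st ! 0) \<noteq> \<infinity>" using cinf flip by simp
    from sp_attained[OF assms this] obtain P where
      p: "walk E P (st!i) (st!0)" and pw: "ereal (walk_weight \<omega> P) \<le> c" using flip by auto
    have st1i: "st1 ! i = st ! 0" using flip ilt by simp
    have st10: "st1 ! 0 = st ! i" using flip ilt cons(4) by simp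
    have st1j: "\<And>j. j \<noteq> i \<Longrightarrow> j \<noteq> 0 \<Longrightarrow> st1 ! j = st ! j" using flip by simp
    have Fi: "walk E (P @ tl (F i)) (st!i) (st''!i)"
      "edges_of (P @ tl (F i)) = edges_of P \<union> edges_of (F i)"
    proof -
      have "walk E (F i) (st1!i) (st''!i)" using IF flip(3) by blast
      then have Fw: "walk E (F i) (st!0) (st''!i)" using st1i by simp
      show "walk E (P @ tl (F i)) (st!i) (st''!i)"
        "edges_of (P @ tl (F i)) = edges_of P \<union> edges_of (F i)"
        using walk_join[OF p Fw] by auto
    qed
    have B': "walk E (B @ tl P) (st''!0) (st!0)"
      "edges_of (B @ tl P) = edges_of B \<union> edges_of P"
      using walk_join[OF _ p, of B "st''!0"] IB st10 by auto
    define F' where "F' = F(i := P @ tl (F i))"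
    have "\<forall>j\<in>{1..k}. walk E (F' j) (st!j) (st''!j)"
      using IF Fi st1j unfolding F'_def by auto
    moreover have "\<And>e. card {j\<in>{1..k}. e \<in> edges_of (F' j)} \<le> card {j\<in>{1..k}. e \<in> edges_of (F j)} + (if e \<in> edges_of P then 1 else 0)"
    proof (rule card_upd)
      show "\<And>j. j \<noteq> i \<Longrightarrow> F' j = F j" by (simp add: F'_def)
      show "edges_of (F' i) \<subseteq> edges_of P \<union> edges_of (F i)"
        unfolding F'_def fun_upd_same Fi(2) by (rule subset_refl)
    qed
    ultimately show ?thesis
      using inv_cons[OF IP IC IW p pw, where F'=F' and st=st and st''=st'' and B'="B @ tl P"] B' by auto
  qed
qed


lemma sum_set_le_list:
  fixes f :: "'a \<Rightarrow> real"
  shows "(\<forall>x\<in>set xs. f x \<ge> 0) \<Longrightarrow> sum f (set xs) \<le> sum_list (map f xs)"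
proof (induction xs)
  case (Cons x xs)
  have "sum f (set (x # xs)) \<le> f x + sum f (set xs)"
    using Cons.prems by (simp add: sum.insert_if)
  then show ?case using Cons by simp
qed simp

lemma path_cost:
  assumes "walk E p a b" "finite E" "\<And>e. e \<in> E \<Longrightarrow> \<omega> e \<ge> 0"
  shows "(\<Sum>e\<in>E. \<omega> e * (if e \<in> edges_of p then 1 else 0)) \<le> walk_weight \<omega> p"
proof -
  have sub: "edges_of p \<subseteq> E" using assms(1) unfolding walk_def edges_of_def by simp
  have "(\<Sum>e\<in>E. \<omega> e * (if e \<in> edges_of p then 1 else 0)) = (\<Sum>e\<in>E. if e \<in> edges_of p then \<omega> e else 0)"
    by (intro sum.cong refl) simp
  also have "\<dots> = sum \<omega> (E \<inter> edges_of p)" using sum.inter_restrict[OF assms(2), of \<omega> "edges_of p"] by simp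
  also have "E \<inter> edges_of p = set (zip p (tl p))" using sub unfolding edges_of_def by auto
  also have "sum \<omega> (set (zip p (tl p))) \<le> walk_weight \<omega> p"
    unfolding walk_weight_def using assms(1,3) unfolding walk_def
    by (intro sum_set_le_list) auto
  finally show ?thesis .
qed

lemma cnt_sum:
  "(\<Sum>e\<in>E. \<omega> e * real (cnt e Ps)) = sum_list (map (\<lambda>p. \<Sum>e\<in>E. \<omega> e * (if e \<in> edges_of p then 1 else 0)) Ps)"
proof (induction Ps)
  case Nil then show ?case by (simp add: cnt_def)
next
  case (Cons p Ps)
  have "(\<Sum>e\<in>E. \<omega> e * real (cnt e (p # Ps))) = (\<Sum>e\<in>E. \<omega> e * (if e \<in> edges_of p then 1 else 0) + \<omega> e * real (cnt e Ps))"
    by (intro sum.cong refl) (simp add: cnt_Cons distrib_left)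
  also have "\<dots> = (\<Sum>e\<in>E. \<omega> e * (if e \<in> edges_of p then 1 else 0)) + (\<Sum>e\<in>E. \<omega> e * real (cnt e Ps))"
    by (rule sum.distrib)
  finally show ?case using Cons by simp
qed

lemma total_cost:
  assumes "finite E" "\<And>e. e \<in> E \<Longrightarrow> \<omega> e \<ge> 0"
    and "\<forall>p\<in>set Ps. \<exists>a b. walk E p a b"
    and "\<forall>e. card {i\<in>{1..k}. e \<in> edges_of (F i)} \<le> cnt e Ps \<and> (e \<in> edges_of B \<longrightarrow> 1 \<le> cnt e Ps)"
  shows "scss_cost E \<omega> k F B \<le> sum_list (map (walk_weight \<omega>) Ps)"
proof -
  have "scss_cost E \<omega> k F B \<le> (\<Sum>e\<in>E. \<omega> e * real (cnt e Ps))"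
    unfolding scss_cost_def
  proof (rule sum_mono)
    fix e assume e: "e \<in> E"
    have "max (card {i\<in>{1..k}. e \<in> edges_of (F i)}) (if e \<in> edges_of B then 1 else 0) \<le> cnt e Ps"
      using spec[OF assms(4), of e] by auto
    then show "\<omega> e * real (max (card {i\<in>{1..k}. e \<in> edges_of (F i)}) (if e \<in> edges_of B then 1 else 0)) \<le> \<omega> e * real (cnt e Ps)"
      using assms(2)[OF e] by (intro mult_left_mono) (simp_all only: of_nat_le_iff)
  qed
  also have "\<dots> = sum_list (map (\<lambda>p. \<Sum>e\<in>E. \<omega> e * (if e \<in> edges_of p then 1 else 0)) Ps)"
    by (rule cnt_sum)
  also have "\<dots> \<le> sum_list (map (walk_weight \<omega>) Ps)"
  proof (rule sum_list_mono)
    fix p assume "p \<in> set Ps"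
    then obtain a b where "walk E p a b" using assms(3) by blast
    then show "(\<Sum>e\<in>E. \<omega> e * (if e \<in> edges_of p then 1 else 0)) \<le> walk_weight \<omega> p"
      by (rule path_cost[OF _ assms(1,2)])
  qed
  finally show ?thesis .
qed

theorem lemma5:
  fixes V :: "'v set" and E :: "('v \<times> 'v) set" and \<omega> :: "'v \<times> 'v \<Rightarrow> real"
    and k :: nat and s t :: 'v
  assumes "finite V" and "E \<subseteq> V \<times> V" and "\<And>e. e \<in> E \<Longrightarrow> \<omega> e \<ge> 0"
    and "s \<in> V" and "t \<in> V"
  shows "OPT_scss E \<omega> k s t \<le> OPT_token E \<omega> k s t"
  unfolding OPT_token_def
proof (rule INF_greatest)
  fix c assume "c \<in> {c. tg_run E \<omega> k (replicate (Suc k) s) (replicate (Suc k) t) c}"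
  then have run: "tg_run E \<omega> k (replicate (Suc k) s) (replicate (Suc k) t) c" by simp
  show "OPT_scss E \<omega> k s t \<le> c"
  proof (cases "c = \<infinity>")
    case True then show ?thesis by simp
  next
    case False
    have fE: "finite E" using assms(2) by (rule finite_subset) (simp add: assms(1))
    have I: "scss_inv E \<omega> k (replicate (Suc k) s) (replicate (Suc k) t) c"
    proof (rule run_inv[where V=V])
      show "finite V" by (rule assms(1))
      show "E \<subseteq> V \<times> V" by (rule assms(2))
      show "\<And>e. e \<in> E \<Longrightarrow> 0 \<le> \<omega> e" by (rule assms(3))
      show "tg_run E \<omega> k (replicate (Suc k) s) (replicate (Suc k) t) c" by (rule run)
      show "length (replicate (Suc k) s) = Suc k" by simp
      show "c \<noteq> \<infinity>" by (rule False)
    qed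
    from I obtain F B Ps where
      IF: "\<forall>i\<in>{1..k}. walk E (F i) (replicate (Suc k) s ! i) (replicate (Suc k) t ! i)"
      and IB: "walk E B (replicate (Suc k) t ! 0) (replicate (Suc k) s ! 0)"
      and IP: "\<forall>p\<in>set Ps. \<exists>a b. walk E p a b"
      and IC: "\<forall>e. card {i\<in>{1..k}. e \<in> edges_of (F i)} \<le> cnt e Ps \<and> (e \<in> edges_of B \<longrightarrow> 1 \<le> cnt e Ps)"
      and IW: "ereal (sum_list (map (walk_weight \<omega>) Ps)) \<le> c"
      unfolding scss_inv_def by blast
    have feas: "scss_feasible E k s t F B"
      unfolding scss_feasible_def
    proof (intro conjI ballI)
      fix i assume i: "i \<in> {1..k}"
      then have "i < Suc k" by simp
      have "walk E (F i) (replicate (Suc k) s ! i) (replicate (Suc k) t ! i)" using IF i by blast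
      then show "walk E (F i) s t" using \<open>i < Suc k\<close> by (simp only: nth_replicate)
    qed (use IB in simp)
    have "OPT_scss E \<omega> k s t \<le> ereal (scss_cost E \<omega> k F B)"
      unfolding OPT_scss_def by (rule INF_lower2[of "(F, B)"]) (use feas in simp_all)
    also have "\<dots> \<le> ereal (sum_list (map (walk_weight \<omega>) Ps))"
      using total_cost[OF fE assms(3) IP IC] by simp
    also have "\<dots> \<le> c" by (rule IW)
    finally show ?thesis .
  qed
qed

end
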